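(* Let $R$ be a von Neumann regular ring and $M$ a right $R$-module, and let $A=\mathrm{Ann}_R(M)$. Then $M$ is $\Sigma$-$\aleph_0$-injective if and only if $R/A$ is an Artinian ring.
   Context: A right $R$-module $N$ is $\aleph_0$-injective if every $R$-homomorphism from a countably generated right ideal of $R$ into $N$ extends to $R$. $M$ is $\Sigma$-$\aleph_0$-injective if the direct sum $M^{(\Lambda)}$ of $\Lambda$ copies of $M$ is $\aleph_0$-injective for every index set $\Lambda$. $\mathrm{Ann}_R(M)=\{r\in R: Mr=0\}$. *)

theory Defs
  imports "HOL-Algebra.Algebra" "HOL-Library.Countable_Set"
begin

text \<open>The module carries its additive abelian group in the add/zero fields of a
  ring record (mult/one of the module are unused); the right action is rsmult.\<close>

record ('a, 'b) rmodule = "'b ring" +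
  rsmult :: "'b \<Rightarrow> 'a \<Rightarrow> 'b"

definition right_module :: "('a, 'c) ring_scheme \<Rightarrow> ('a, 'b, 'd) rmodule_scheme \<Rightarrow> bool" where
  "right_module R M \<longleftrightarrow> ring R \<and> abelian_group M \<and>
     (\<forall>x\<in>carrier M. \<forall>r\<in>carrier R. rsmult M x r \<in> carrier M) \<and>
     (\<forall>x\<in>carrier M. \<forall>y\<in>carrier M. \<forall>r\<in>carrier R.
        rsmult M (x \<oplus>\<^bsub>M\<^esub> y) r = rsmult M x r \<oplus>\<^bsub>M\<^esub> rsmult M y r) \<and>
     (\<forall>x\<in>carrier M. \<forall>r\<in>carrier R. \<forall>s\<in>carrier R.
        rsmult M x (r \<oplus>\<^bsub>R\<^esub> s) = rsmult M x r \<oplus>\<^bsub>M\<^esub> rsmult M x s) \<and>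
     (\<forall>x\<in>carrier M. \<forall>r\<in>carrier R. \<forall>s\<in>carrier R.
        rsmult M (rsmult M x r) s = rsmult M x (r \<otimes>\<^bsub>R\<^esub> s)) \<and>
     (\<forall>x\<in>carrier M. rsmult M x \<one>\<^bsub>R\<^esub> = x)"

definition von_neumann_regular :: "('a, 'c) ring_scheme \<Rightarrow> bool" where
  "von_neumann_regular R \<longleftrightarrow> ring R \<and>
     (\<forall>a\<in>carrier R. \<exists>x\<in>carrier R. a \<otimes>\<^bsub>R\<^esub> x \<otimes>\<^bsub>R\<^esub> a = a)"

definition right_ideal :: "'a set \<Rightarrow> ('a, 'c) ring_scheme \<Rightarrow> bool" where
  "right_ideal I R \<longleftrightarrow> additive_subgroup I R \<and>
     (\<forall>x\<in>I. \<forall>r\<in>carrier R. x \<otimes>\<^bsub>R\<^esub> r \<in> I)"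

definition right_ideal_gen :: "('a, 'c) ring_scheme \<Rightarrow> 'a set \<Rightarrow> 'a set" where
  "right_ideal_gen R S = \<Inter>{J. right_ideal J R \<and> S \<subseteq> J}"

definition countably_generated_right_ideal :: "'a set \<Rightarrow> ('a, 'c) ring_scheme \<Rightarrow> bool" where
  "countably_generated_right_ideal I R \<longleftrightarrow> right_ideal I R \<and>
     (\<exists>S. countable S \<and> S \<subseteq> carrier R \<and> I = right_ideal_gen R S)"

definition rhom_on :: "('a, 'c) ring_scheme \<Rightarrow> 'a set \<Rightarrow> ('a, 'b, 'd) rmodule_scheme \<Rightarrow> ('a \<Rightarrow> 'b) \<Rightarrow> bool" where
  "rhom_on R I N f \<longleftrightarrow>
     (\<forall>x\<in>I. f x \<in> carrier N) \<and>
     (\<forall>x\<in>I. \<forall>y\<in>I. f (x \<oplus>\<^bsub>R\<^esub> y) = f x \<oplus>\<^bsub>N\<^esub> f y) \<and>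
     (\<forall>x\<in>I. \<forall>r\<in>carrier R. f (x \<otimes>\<^bsub>R\<^esub> r) = rsmult N (f x) r)"

definition aleph0_injective :: "('a, 'c) ring_scheme \<Rightarrow> ('a, 'b, 'd) rmodule_scheme \<Rightarrow> bool" where
  "aleph0_injective R N \<longleftrightarrow>
     (\<forall>I f. countably_generated_right_ideal I R \<and> rhom_on R I N f \<longrightarrow>
        (\<exists>g. rhom_on R (carrier R) N g \<and> (\<forall>x\<in>I. g x = f x)))"

definition dsum :: "('a, 'b, 'd) rmodule_scheme \<Rightarrow> 'i set \<Rightarrow> ('a, 'i \<Rightarrow> 'b) rmodule" where
  "dsum M \<Lambda> = \<lparr> carrier = {f. f \<in> extensional \<Lambda> \<and> (\<forall>i\<in>\<Lambda>. f i \<in> carrier M) \<and>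
                                finite {i\<in>\<Lambda>. f i \<noteq> \<zero>\<^bsub>M\<^esub>}},
                 monoid.mult = (\<lambda>f g. undefined), monoid.one = undefined,
                 ring.zero = (\<lambda>i\<in>\<Lambda>. \<zero>\<^bsub>M\<^esub>),
                 ring.add = (\<lambda>f g. \<lambda>i\<in>\<Lambda>. f i \<oplus>\<^bsub>M\<^esub> g i),
                 rsmult = (\<lambda>f r. \<lambda>i\<in>\<Lambda>. rsmult M (f i) r) \<rparr>"

definition sigma_aleph0_injective :: "'i itself \<Rightarrow> ('a, 'c) ring_scheme \<Rightarrow> ('a, 'b, 'd) rmodule_scheme \<Rightarrow> bool" where
  "sigma_aleph0_injective _ R M \<longleftrightarrow> (\<forall>\<Lambda>::'i set. aleph0_injective R (dsum M \<Lambda>))"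

definition Ann :: "('a, 'c) ring_scheme \<Rightarrow> ('a, 'b, 'd) rmodule_scheme \<Rightarrow> 'a set" where
  "Ann R M = {r\<in>carrier R. \<forall>x\<in>carrier M. rsmult M x r = \<zero>\<^bsub>M\<^esub>}"

definition artinian_ring :: "('a, 'c) ring_scheme \<Rightarrow> bool" where
  "artinian_ring R \<longleftrightarrow> ring R \<and>
     (\<forall>I :: nat \<Rightarrow> 'a set. (\<forall>n. right_ideal (I n) R) \<and> (\<forall>n. I (Suc n) \<subseteq> I n)
        \<longrightarrow> (\<exists>n. \<forall>m\<ge>n. I m = I n))"

end

theory Submission
  imports Defs
begin

context ring begin

lemma rm_closed: "right_module R M \<Longrightarrow> x \<in> carrier M \<Longrightarrow> r \<in> carrier R \<Longrightarrow> rsmult M x r \<in> carrier M"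
  unfolding right_module_def by blast
lemma rm_ag: "right_module R M \<Longrightarrow> abelian_group M"
  unfolding right_module_def by blast
lemma rm_dl: "right_module R M \<Longrightarrow> x \<in> carrier M \<Longrightarrow> y \<in> carrier M \<Longrightarrow> r \<in> carrier R \<Longrightarrow>
   rsmult M (x \<oplus>\<^bsub>M\<^esub> y) r = rsmult M x r \<oplus>\<^bsub>M\<^esub> rsmult M y r"
  unfolding right_module_def by blast
lemma rm_dr: "right_module R M \<Longrightarrow> x \<in> carrier M \<Longrightarrow> r \<in> carrier R \<Longrightarrow> s \<in> carrier R \<Longrightarrow>
   rsmult M x (r \<oplus> s) = rsmult M x r \<oplus>\<^bsub>M\<^esub> rsmult M x s"
  unfolding right_module_def by blast
lemma rm_assoc: "right_module R M \<Longrightarrow> x \<in> carrier M \<Longrightarrow> r \<in> carrier R \<Longrightarrow> s \<in> carrier R \<Longrightarrow>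
   rsmult M (rsmult M x r) s = rsmult M x (r \<otimes> s)"
  unfolding right_module_def by blast
lemma rm_one: "right_module R M \<Longrightarrow> x \<in> carrier M \<Longrightarrow> rsmult M x \<one> = x"
  unfolding right_module_def by blast

lemma rm_zero_r:
  assumes m: "right_module R M" and x: "x \<in> carrier M"
  shows "rsmult M x \<zero> = \<zero>\<^bsub>M\<^esub>"
proof -
  interpret M: abelian_group M using rm_ag[OF m] .
  have c: "rsmult M x \<zero> \<in> carrier M" using rm_closed[OF m x] by simp
  have "rsmult M x \<zero> \<oplus>\<^bsub>M\<^esub> rsmult M x \<zero> = rsmult M x \<zero>"
    using rm_dr[OF m x zero_closed zero_closed] by simp
  thus ?thesis using c by simp
qed

lemma rm_zero_l:
  assumes m: "right_module R M" and r: "r \<in> carrier R"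
  shows "rsmult M \<zero>\<^bsub>M\<^esub> r = \<zero>\<^bsub>M\<^esub>"
proof -
  interpret M: abelian_group M using rm_ag[OF m] .
  have c: "rsmult M \<zero>\<^bsub>M\<^esub> r \<in> carrier M" using rm_closed[OF m _ r] by simp
  have "rsmult M \<zero>\<^bsub>M\<^esub> r \<oplus>\<^bsub>M\<^esub> rsmult M \<zero>\<^bsub>M\<^esub> r = rsmult M \<zero>\<^bsub>M\<^esub> r"
    using rm_dl[OF m M.zero_closed M.zero_closed r] by simp
  thus ?thesis using c by simp
qed

lemma rm_neg_r:
  assumes m: "right_module R M" and x: "x \<in> carrier M" and r: "r \<in> carrier R"
  shows "rsmult M x (\<ominus> r) = \<ominus>\<^bsub>M\<^esub> rsmult M x r"
proof -
  interpret M: abelian_group M using rm_ag[OF m] .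
  have "rsmult M x r \<oplus>\<^bsub>M\<^esub> rsmult M x (\<ominus> r) = rsmult M x (r \<oplus> \<ominus> r)"
    using rm_dr[OF m x r] r by simp
  also have "\<dots> = \<zero>\<^bsub>M\<^esub>" using r rm_zero_r[OF m x] by (simp add: r_neg)
  finally show ?thesis using rm_closed[OF m x] r
    by (metis M.minus_equality M.a_comm a_inv_closed)
qed


lemma add_subgroupI':
  assumes "J \<subseteq> carrier R" "\<zero> \<in> J" "\<And>x y. x \<in> J \<Longrightarrow> y \<in> J \<Longrightarrow> x \<oplus> y \<in> J"
    "\<And>x. x \<in> J \<Longrightarrow> \<ominus> x \<in> J"
  shows "subgroup J (add_monoid R)"
  apply (rule add.subgroupI)
  using assms by (auto simp: a_inv_def)

lemma right_idealI':
  assumes "J \<subseteq> carrier R" "\<zero> \<in> J" "\<And>x y. x \<in> J \<Longrightarrow> y \<in> J \<Longrightarrow> x \<oplus> y \<in> J"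
    "\<And>x. x \<in> J \<Longrightarrow> \<ominus> x \<in> J" "\<And>x r. x \<in> J \<Longrightarrow> r \<in> carrier R \<Longrightarrow> x \<otimes> r \<in> J"
  shows "right_ideal J R"
  unfolding right_ideal_def using add_subgroupI'[OF assms(1-4)] assms(5)
  by (simp add: additive_subgroup.intro)

lemma ri_as: "right_ideal J R \<Longrightarrow> additive_subgroup J R"
  unfolding right_ideal_def by (erule conjE)
lemma ri_carr: "right_ideal J R \<Longrightarrow> J \<subseteq> carrier R"
  by (rule additive_subgroup.a_subset[OF ri_as])
lemma ri_zero: "right_ideal J R \<Longrightarrow> \<zero> \<in> J"
  by (rule additive_subgroup.zero_closed[OF ri_as])
lemma ri_add: "right_ideal J R \<Longrightarrow> x \<in> J \<Longrightarrow> y \<in> J \<Longrightarrow> x \<oplus> y \<in> J"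
  by (rule additive_subgroup.a_closed[OF ri_as])
lemma ri_neg: "right_ideal J R \<Longrightarrow> x \<in> J \<Longrightarrow> \<ominus> x \<in> J"
  by (rule additive_subgroup.a_inv_closed[OF ri_as])
lemma ri_minus: "right_ideal J R \<Longrightarrow> x \<in> J \<Longrightarrow> y \<in> J \<Longrightarrow> x \<ominus> y \<in> J"
  by (simp add: a_minus_def ri_add ri_neg)
lemma ri_mult: "right_ideal J R \<Longrightarrow> x \<in> J \<Longrightarrow> r \<in> carrier R \<Longrightarrow> x \<otimes> r \<in> J"
  unfolding right_ideal_def by blast

lemma ri_Inter: assumes "F \<noteq> {}" "\<And>J. J \<in> F \<Longrightarrow> right_ideal J R" shows "right_ideal (\<Inter>F) R"
proof (rule right_idealI')
  show "\<Inter> F \<subseteq> carrier R" using assms ri_carr by blast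
  show "\<zero> \<in> \<Inter> F" using assms(2) ri_zero by blast
  show "x \<oplus> y \<in> \<Inter> F" if "x \<in> \<Inter> F" "y \<in> \<Inter> F" for x y
    using that assms(2) ri_add by blast
  show "\<ominus> x \<in> \<Inter> F" if "x \<in> \<Inter> F" for x
    using that assms(2) ri_neg by blast
  show "x \<otimes> r \<in> \<Inter> F" if "x \<in> \<Inter> F" "r \<in> carrier R" for x r
    using that assms(2) ri_mult by blast
qed

lemma ri_carrier: "right_ideal (carrier R) R"
  by (rule right_idealI') simp_all

lemma gen_ri: "S \<subseteq> carrier R \<Longrightarrow> right_ideal (right_ideal_gen R S) R"
  unfolding right_ideal_gen_def by (rule ri_Inter) (use ri_carrier in auto)
lemma gen_sub: "S \<subseteq> right_ideal_gen R S"
  unfolding right_ideal_gen_def by blast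
lemma gen_min: "right_ideal J R \<Longrightarrow> S \<subseteq> J \<Longrightarrow> right_ideal_gen R S \<subseteq> J"
  unfolding right_ideal_gen_def by blast

lemma ri_principal: assumes e: "e \<in> carrier R" shows "right_ideal {e \<otimes> r |r. r \<in> carrier R} R"
proof (rule right_idealI')
  show "{e \<otimes> r |r. r \<in> carrier R} \<subseteq> carrier R" using e m_closed by blast
  have "\<zero> = e \<otimes> \<zero>" using e by simp
  thus "\<zero> \<in> {e \<otimes> r |r. r \<in> carrier R}" using zero_closed by blast
  fix x y assume "x \<in> {e \<otimes> r |r. r \<in> carrier R}" "y \<in> {e \<otimes> r |r. r \<in> carrier R}"
  then obtain a b where ab: "a \<in> carrier R" "b \<in> carrier R" "x = e \<otimes> a" "y = e \<otimes> b" by blast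
  hence "x \<oplus> y = e \<otimes> (a \<oplus> b)" using e by (simp add: r_distr)
  thus "x \<oplus> y \<in> {e \<otimes> r |r. r \<in> carrier R}" using ab by blast
next
  fix x assume "x \<in> {e \<otimes> r |r. r \<in> carrier R}"
  then obtain a where a: "a \<in> carrier R" "x = e \<otimes> a" by blast
  hence "\<ominus> x = e \<otimes> (\<ominus> a)" using e by (simp add: r_minus)
  thus "\<ominus> x \<in> {e \<otimes> r |r. r \<in> carrier R}" using a by blast
next
  fix x r assume "x \<in> {e \<otimes> r |r. r \<in> carrier R}" and r: "r \<in> carrier R"
  then obtain a where a: "a \<in> carrier R" "x = e \<otimes> a" by blast
  hence "x \<otimes> r = e \<otimes> (a \<otimes> r)" using e r by (simp add: m_assoc)
  thus "x \<otimes> r \<in> {e \<otimes> r |r. r \<in> carrier R}" using a r by blast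
qed

lemma Ann_carr: "Ann R M \<subseteq> carrier R" unfolding Ann_def by auto
lemma AnnD: "a \<in> Ann R M \<Longrightarrow> x \<in> carrier M \<Longrightarrow> rsmult M x a = \<zero>\<^bsub>M\<^esub>" unfolding Ann_def by auto
lemma AnnI: "a \<in> carrier R \<Longrightarrow> (\<And>x. x \<in> carrier M \<Longrightarrow> rsmult M x a = \<zero>\<^bsub>M\<^esub>) \<Longrightarrow> a \<in> Ann R M"
  unfolding Ann_def by auto

lemma Ann_ideal: assumes m: "right_module R M" shows "ideal (Ann R M) R"
proof (rule idealI)
  show "ring R" by (rule ring_axioms)
  interpret M: abelian_group M using rm_ag[OF m] .
  show "subgroup (Ann R M) (add_monoid R)"
  proof (rule add_subgroupI')
    show "Ann R M \<subseteq> carrier R" by (rule Ann_carr)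
    show "\<zero> \<in> Ann R M" by (rule AnnI) (simp_all add: rm_zero_r[OF m])
    fix x y assume x: "x \<in> Ann R M" and y: "y \<in> Ann R M"
    have xc: "x \<in> carrier R" and yc: "y \<in> carrier R" using x y Ann_carr by auto
    show "x \<oplus> y \<in> Ann R M"
    proof (rule AnnI)
      fix z assume z: "z \<in> carrier M"
      show "rsmult M z (x \<oplus> y) = \<zero>\<^bsub>M\<^esub>" using rm_dr[OF m z xc yc] AnnD[OF x z] AnnD[OF y z] by simp
    qed (use xc yc in simp)
  next
    fix x assume x: "x \<in> Ann R M"
    have xc: "x \<in> carrier R" using x Ann_carr by auto
    show "\<ominus> x \<in> Ann R M"
    proof (rule AnnI)
      fix z assume z: "z \<in> carrier M"
      show "rsmult M z (\<ominus> x) = \<zero>\<^bsub>M\<^esub>" using rm_neg_r[OF m z xc] AnnD[OF x z] by simp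
    qed (use xc in simp)
  qed
next
  fix a x assume a: "a \<in> Ann R M" and x: "x \<in> carrier R"
  have ac: "a \<in> carrier R" using a Ann_carr by blast
  show "x \<otimes> a \<in> Ann R M"
  proof (rule AnnI)
    fix z assume z: "z \<in> carrier M"
    show "rsmult M z (x \<otimes> a) = \<zero>\<^bsub>M\<^esub>" using rm_assoc[OF m z x ac] AnnD[OF a rm_closed[OF m z x]] by simp
  qed (use ac x in simp)
  show "a \<otimes> x \<in> Ann R M"
  proof (rule AnnI)
    fix z assume z: "z \<in> carrier M"
    have "rsmult M z (a \<otimes> x) = rsmult M (rsmult M z a) x" using rm_assoc[OF m z ac x] by simp
    also have "\<dots> = \<zero>\<^bsub>M\<^esub>" using AnnD[OF a z] rm_zero_l[OF m x] by simp
    finally show "rsmult M z (a \<otimes> x) = \<zero>\<^bsub>M\<^esub>" .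
  qed (use ac x in simp)
qed

end

definition dccA :: "('a, 'c) ring_scheme \<Rightarrow> 'a set \<Rightarrow> bool" where
  "dccA R A \<longleftrightarrow> (\<forall>I :: nat \<Rightarrow> 'a set. (\<forall>n. right_ideal (I n) R \<and> A \<subseteq> I n) \<and> (\<forall>n. I (Suc n) \<subseteq> I n)
        \<longrightarrow> (\<exists>n. \<forall>m\<ge>n. I m = I n))"

context ring begin

lemma quot_facts:
  assumes A: "ideal A R"
  shows "ring (R Quot A)" "ring_hom_ring R (R Quot A) ((+>) A)"
    "carrier (R Quot A) = (+>) A ` carrier R"
  using ideal.quotient_is_ring[OF A] ideal.rcos_ring_hom_ring[OF A]
  by (auto simp: FactRing_def A_RCOSETS_def')

lemma quot_img_ri:
  assumes A: "ideal A R" and J: "right_ideal J R"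
  shows "right_ideal ((+>) A ` J) (R Quot A)"
proof -
  interpret Q: ring "R Quot A" using quot_facts[OF A] by simp
  interpret H: ring_hom_ring R "R Quot A" "(+>) A" using quot_facts[OF A] by simp
  have Jc: "J \<subseteq> carrier R" using ri_carr[OF J] .
  show ?thesis
  proof (rule Q.right_idealI')
    show "(+>) A ` J \<subseteq> carrier (R Quot A)" using Jc H.hom_closed by blast
    have "\<zero>\<^bsub>R Quot A\<^esub> = A +> \<zero>" using H.hom_zero by simp
    thus "\<zero>\<^bsub>R Quot A\<^esub> \<in> (+>) A ` J" using ri_zero[OF J] by blast
  next
    fix U V assume "U \<in> (+>) A ` J" "V \<in> (+>) A ` J"
    then obtain x y where xy: "x \<in> J" "y \<in> J" "U = A +> x" "V = A +> y" by blast
    have xc: "x \<in> carrier R" "y \<in> carrier R" using xy Jc by auto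
    have "U \<oplus>\<^bsub>R Quot A\<^esub> V = A +> (x \<oplus> y)" using H.hom_add[OF xc] xy by simp
    thus "U \<oplus>\<^bsub>R Quot A\<^esub> V \<in> (+>) A ` J" using ri_add[OF J xy(1,2)] by blast
  next
    fix U assume "U \<in> (+>) A ` J"
    then obtain x where xy: "x \<in> J" "U = A +> x" by blast
    have xc: "x \<in> carrier R" using xy Jc by auto
    have "\<ominus>\<^bsub>R Quot A\<^esub> U = A +> (\<ominus> x)" using H.hom_a_inv[OF xc] xy by simp
    thus "\<ominus>\<^bsub>R Quot A\<^esub> U \<in> (+>) A ` J" using ri_neg[OF J xy(1)] by blast
  next
    fix U W assume "U \<in> (+>) A ` J" "W \<in> carrier (R Quot A)"
    then obtain x z where xy: "x \<in> J" "U = A +> x" "z \<in> carrier R" "W = A +> z"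
      using quot_facts(3)[OF A] by blast
    have xc: "x \<in> carrier R" using xy Jc by auto
    have "U \<otimes>\<^bsub>R Quot A\<^esub> W = A +> (x \<otimes> z)" using H.hom_mult[OF xc xy(3)] xy by simp
    thus "U \<otimes>\<^bsub>R Quot A\<^esub> W \<in> (+>) A ` J" using ri_mult[OF J xy(1,3)] by blast
  qed
qed

lemma quot_img_mono:
  assumes A: "ideal A R" and J1: "right_ideal J1 R" and J2: "right_ideal J2 R" and AJ: "A \<subseteq> J2"
    and sub: "(+>) A ` J1 \<subseteq> (+>) A ` J2"
  shows "J1 \<subseteq> J2"
proof
  fix x assume x: "x \<in> J1"
  then obtain y where y: "y \<in> J2" "A +> x = A +> y" using sub by blast
  have xc: "x \<in> carrier R" and yc: "y \<in> carrier R" using x y ri_carr[OF J1] ri_carr[OF J2] by auto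
  have "x \<ominus> y \<in> A" using quotient_eq_iff_same_a_r_cos[OF A xc yc] y by simp
  hence "x \<ominus> y \<in> J2" using AJ by blast
  hence "(x \<ominus> y) \<oplus> y \<in> J2" using ri_add[OF J2 _ y(1)] by blast
  moreover have "(x \<ominus> y) \<oplus> y = x" using xc yc by (simp add: ring_simprules)
  ultimately show "x \<in> J2" by simp
qed

lemma quot_preimg:
  assumes A: "ideal A R" and K: "right_ideal K (R Quot A)"
  shows "right_ideal {x \<in> carrier R. A +> x \<in> K} R" "A \<subseteq> {x \<in> carrier R. A +> x \<in> K}"
    "(+>) A ` {x \<in> carrier R. A +> x \<in> K} = K"
proof -
  interpret Q: ring "R Quot A" using quot_facts[OF A] by simp
  interpret H: ring_hom_ring R "R Quot A" "(+>) A" using quot_facts[OF A] by simp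
  show "right_ideal {x \<in> carrier R. A +> x \<in> K} R"
  proof (rule right_idealI')
    show "\<zero> \<in> {x \<in> carrier R. A +> x \<in> K}" using Q.ri_zero[OF K] H.hom_zero by simp
  next
    fix x y assume "x \<in> {x \<in> carrier R. A +> x \<in> K}" "y \<in> {x \<in> carrier R. A +> x \<in> K}"
    thus "x \<oplus> y \<in> {x \<in> carrier R. A +> x \<in> K}" using Q.ri_add[OF K] H.hom_add by auto
  next
    fix x assume "x \<in> {x \<in> carrier R. A +> x \<in> K}"
    thus "\<ominus> x \<in> {x \<in> carrier R. A +> x \<in> K}" using Q.ri_neg[OF K] H.hom_a_inv by auto
  next
    fix x r assume "x \<in> {x \<in> carrier R. A +> x \<in> K}" "r \<in> carrier R"
    thus "x \<otimes> r \<in> {x \<in> carrier R. A +> x \<in> K}" using Q.ri_mult[OF K] H.hom_mult H.hom_closed by auto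
  qed auto
  show "A \<subseteq> {x \<in> carrier R. A +> x \<in> K}"
  proof
    fix a assume a: "a \<in> A"
    have ac: "a \<in> carrier R" using ideal.Icarr[OF A a] .
    have "A +> a = A +> \<zero>" using quotient_eq_iff_same_a_r_cos[OF A ac zero_closed] a ac by (simp add: a_minus_def)
    also have "\<dots> = \<zero>\<^bsub>R Quot A\<^esub>" using H.hom_zero .
    finally show "a \<in> {x \<in> carrier R. A +> x \<in> K}" using ac Q.ri_zero[OF K] by simp
  qed
  show "(+>) A ` {x \<in> carrier R. A +> x \<in> K} = K"
  proof
    show "(+>) A ` {x \<in> carrier R. A +> x \<in> K} \<subseteq> K" by auto
    show "K \<subseteq> (+>) A ` {x \<in> carrier R. A +> x \<in> K}"
    proof
      fix U assume U: "U \<in> K"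
      hence "U \<in> (+>) A ` carrier R" using Q.ri_carr[OF K] quot_facts(3)[OF A] by auto
      then obtain x where "x \<in> carrier R" "U = A +> x" by auto
      thus "U \<in> (+>) A ` {x \<in> carrier R. A +> x \<in> K}" using U by auto
    qed
  qed
qed

lemma quot_artinian:
  assumes A: "ideal A R"
  shows "artinian_ring (R Quot A) \<longleftrightarrow> dccA R A"
proof
  assume art: "artinian_ring (R Quot A)"
  show "dccA R A" unfolding dccA_def
  proof (intro allI impI)
    fix I :: "nat \<Rightarrow> 'a set" assume h: "(\<forall>n. right_ideal (I n) R \<and> A \<subseteq> I n) \<and> (\<forall>n. I (Suc n) \<subseteq> I n)"
    define K where "K n = (+>) A ` I n" for n
    have "\<forall>n. right_ideal (K n) (R Quot A)" using h quot_img_ri[OF A] unfolding K_def by blast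
    moreover have "\<forall>n. K (Suc n) \<subseteq> K n" using h unfolding K_def by blast
    ultimately obtain n where n: "\<forall>m\<ge>n. K m = K n" using art unfolding artinian_ring_def by blast
    have "\<forall>m\<ge>n. I m = I n"
    proof (intro allI impI)
      fix m assume "m \<ge> n"
      hence "K m = K n" using n by blast
      thus "I m = I n" using quot_img_mono[OF A] h unfolding K_def by (metis subset_refl subset_antisym)
    qed
    thus "\<exists>n. \<forall>m\<ge>n. I m = I n" by blast
  qed
next
  assume dcc: "dccA R A"
  show "artinian_ring (R Quot A)" unfolding artinian_ring_def
  proof (intro conjI allI impI)
    show "ring (R Quot A)" using quot_facts[OF A] by simp
    fix K :: "nat \<Rightarrow> 'a set set" assume h: "(\<forall>n. right_ideal (K n) (R Quot A)) \<and> (\<forall>n. K (Suc n) \<subseteq> K n)"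
    define I where "I n = {x \<in> carrier R. A +> x \<in> K n}" for n
    have "\<forall>n. right_ideal (I n) R \<and> A \<subseteq> I n" using h quot_preimg[OF A] unfolding I_def by blast
    moreover have "\<forall>n. I (Suc n) \<subseteq> I n" using h unfolding I_def by blast
    ultimately obtain n where n: "\<forall>m\<ge>n. I m = I n" using dcc unfolding dccA_def by blast
    have "\<forall>m\<ge>n. K m = K n"
    proof (intro allI impI)
      fix m assume "m \<ge> n"
      hence "I m = I n" using n by blast
      thus "K m = K n" using quot_preimg(3)[OF A] h unfolding I_def by metis
    qed
    thus "\<exists>n. \<forall>m\<ge>n. K m = K n" by blast
  qed
qed

end

definition stepP :: "('a, 'c) ring_scheme \<Rightarrow> 'a \<Rightarrow> 'a \<Rightarrow> 'a \<Rightarrow> bool" where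
  "stepP R e b g \<longleftrightarrow> g \<in> carrier R \<and> g \<otimes>\<^bsub>R\<^esub> g = g \<and> e \<otimes>\<^bsub>R\<^esub> g = \<zero>\<^bsub>R\<^esub> \<and> g \<otimes>\<^bsub>R\<^esub> e = \<zero>\<^bsub>R\<^esub>
     \<and> (e \<oplus>\<^bsub>R\<^esub> g) \<otimes>\<^bsub>R\<^esub> b = b
     \<and> (\<forall>J. right_ideal J R \<longrightarrow> e \<in> J \<longrightarrow> b \<in> J \<longrightarrow> g \<in> J)
     \<and> g \<otimes>\<^bsub>R\<^esub> ((\<one>\<^bsub>R\<^esub> \<ominus>\<^bsub>R\<^esub> e) \<otimes>\<^bsub>R\<^esub> b) = (\<one>\<^bsub>R\<^esub> \<ominus>\<^bsub>R\<^esub> e) \<otimes>\<^bsub>R\<^esub> b"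

definition stp :: "('a, 'c) ring_scheme \<Rightarrow> 'a \<Rightarrow> 'a \<Rightarrow> 'a" where
  "stp R e b = (SOME g. stepP R e b g)"

context ring begin

lemma reg_step:
  assumes reg: "\<forall>a\<in>carrier R. \<exists>x\<in>carrier R. a \<otimes> x \<otimes> a = a"
    and e: "e \<in> carrier R" and ee: "e \<otimes> e = e" and b: "b \<in> carrier R"
  shows "\<exists>f\<in>carrier R. f \<otimes> f = f \<and> e \<otimes> f = \<zero> \<and> f \<otimes> e = \<zero>
      \<and> f \<otimes> ((\<one> \<ominus> e) \<otimes> b) = (\<one> \<ominus> e) \<otimes> b
      \<and> (\<exists>r\<in>carrier R. \<exists>s\<in>carrier R. f = b \<otimes> r \<oplus> e \<otimes> s)"
proof -
  define c where "c = (\<one> \<ominus> e) \<otimes> b"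
  have c: "c \<in> carrier R" unfolding c_def using e b by simp
  obtain y where y: "y \<in> carrier R" and cyc: "c \<otimes> y \<otimes> c = c" using reg c by blast
  have ee2: "e \<otimes> (e \<otimes> z) = e \<otimes> z" if "z \<in> carrier R" for z
    using that e ee by (simp add: m_assoc[symmetric])
  have ec: "e \<otimes> c = \<zero>" unfolding c_def using e b ee ee2 by (simp add: ring_simprules)
  have ec2: "e \<otimes> (c \<otimes> z) = \<zero>" if "z \<in> carrier R" for z
    using that e c ec by (simp add: m_assoc[symmetric])
  have cyc2: "c \<otimes> (y \<otimes> (c \<otimes> z)) = c \<otimes> z" if "z \<in> carrier R" for z
    using that y c cyc by (simp add: m_assoc[symmetric])
  define f where "f = c \<otimes> y \<otimes> (\<one> \<ominus> e)"
  have f: "f \<in> carrier R" unfolding f_def using c y e by simp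
  have "f \<otimes> f = f" unfolding f_def using c y e ee ee2 ec ec2 cyc cyc2 by (simp add: ring_simprules)
  moreover have "e \<otimes> f = \<zero>" unfolding f_def using c y e ee ee2 ec ec2 by (simp add: ring_simprules)
  moreover have "f \<otimes> e = \<zero>" unfolding f_def using c y e ee ee2 ec ec2 by (simp add: ring_simprules)
  moreover have "f \<otimes> c = c" unfolding f_def using c y e ee ee2 ec ec2 cyc cyc2 by (simp add: ring_simprules)
  moreover have "f = b \<otimes> (y \<otimes> (\<one> \<ominus> e)) \<oplus> e \<otimes> (\<ominus> (b \<otimes> (y \<otimes> (\<one> \<ominus> e))))"
    unfolding f_def c_def using b y e by (simp add: ring_simprules)
  moreover have "y \<otimes> (\<one> \<ominus> e) \<in> carrier R" "\<ominus> (b \<otimes> (y \<otimes> (\<one> \<ominus> e))) \<in> carrier R" using b y e by simp_all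
  ultimately show ?thesis using f unfolding c_def by blast
qed

lemma stp_ok:
  assumes reg: "\<forall>a\<in>carrier R. \<exists>x\<in>carrier R. a \<otimes> x \<otimes> a = a"
    and e: "e \<in> carrier R" and ee: "e \<otimes> e = e" and b: "b \<in> carrier R"
  shows "stepP R e b (stp R e b)"
proof -
  obtain f r s where f: "f \<in> carrier R" "f \<otimes> f = f" "e \<otimes> f = \<zero>" "f \<otimes> e = \<zero>"
      "f \<otimes> ((\<one> \<ominus> e) \<otimes> b) = (\<one> \<ominus> e) \<otimes> b" and rs: "r \<in> carrier R" "s \<in> carrier R" "f = b \<otimes> r \<oplus> e \<otimes> s"
    using reg_step[OF reg e ee b] by blast
  have fe2: "f \<otimes> (e \<otimes> z) = \<zero>" if "z \<in> carrier R" for z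
    using that e f by (simp add: m_assoc[symmetric])
  have "(e \<oplus> f) \<otimes> b = b"
  proof -
    have "f \<otimes> ((\<one> \<ominus> e) \<otimes> b) = f \<otimes> b" using f(1) e b fe2 by (simp add: ring_simprules)
    hence "f \<otimes> b = (\<one> \<ominus> e) \<otimes> b" using f(5) by simp
    thus ?thesis using f(1) e b by (simp add: ring_simprules)
  qed
  moreover have "\<forall>J. right_ideal J R \<longrightarrow> e \<in> J \<longrightarrow> b \<in> J \<longrightarrow> f \<in> J"
    using rs ri_add ri_mult by metis
  ultimately have "stepP R e b f" using f unfolding stepP_def by blast
  thus ?thesis unfolding stp_def by (rule someI)
qed

lemma up_chain:
  assumes h: "\<And>n. e n \<in> carrier R \<and> e n \<otimes> e n = e n \<and> g n \<in> carrier R \<and> g n \<otimes> g n = g n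
      \<and> e n \<otimes> g n = \<zero> \<and> g n \<otimes> e n = \<zero> \<and> e (Suc n) = e n \<oplus> g n"
  shows up_chain_le: "m \<le> n \<Longrightarrow> e n \<otimes> e m = e m \<and> e m \<otimes> e n = e m"
    and up_chain_orth: "k \<noteq> j \<Longrightarrow> g k \<otimes> g j = \<zero>"
proof -
  show le: "e n \<otimes> e m = e m \<and> e m \<otimes> e n = e m" if "m \<le> n" for m n
    using that
  proof (induction n)
    case 0 thus ?case using h[of 0] by simp
  next
    case (Suc n)
    show ?case
    proof (cases "m = Suc n")
      case True thus ?thesis using h[of "Suc n"] by simp
    next
      case False
      hence mn: "m \<le> n" using Suc by simp
      have IH: "e n \<otimes> e m = e m" "e m \<otimes> e n = e m" using Suc.IH[OF mn] by auto
      have c: "e n \<in> carrier R" "e m \<in> carrier R" "g n \<in> carrier R" using h[of n] h[of m] by auto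
      have "g n \<otimes> e m = g n \<otimes> (e n \<otimes> e m)" using IH by simp
      also have "\<dots> = (g n \<otimes> e n) \<otimes> e m" using c by (simp add: m_assoc)
      also have "\<dots> = \<zero>" using h[of n] c by simp
      finally have 1: "g n \<otimes> e m = \<zero>" .
      have "e m \<otimes> g n = (e m \<otimes> e n) \<otimes> g n" using IH by simp
      also have "\<dots> = e m \<otimes> (e n \<otimes> g n)" using c by (simp add: m_assoc)
      also have "\<dots> = \<zero>" using h[of n] c by simp
      finally have 2: "e m \<otimes> g n = \<zero>" .
      show ?thesis using h[of n] c 1 2 IH by (simp add: l_distr r_distr)
    qed
  qed
  have eg: "e (Suc k) \<otimes> g k = g k" "g k \<otimes> e (Suc k) = g k" for k
    using h[of k] by (simp_all add: l_distr r_distr)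
  have ord: "g k \<otimes> g j = \<zero>" if "k < j" for k j
  proof -
    have c: "e j \<in> carrier R" "e (Suc k) \<in> carrier R" "g k \<in> carrier R" "g j \<in> carrier R" using h[of j] h[of k] h[of "Suc k"] by auto
    have L: "e j \<otimes> e (Suc k) = e (Suc k)" "e (Suc k) \<otimes> e j = e (Suc k)" using le[of "Suc k" j] that by auto
    have "g k \<otimes> g j = (g k \<otimes> e (Suc k)) \<otimes> g j" using eg by simp
    also have "\<dots> = g k \<otimes> ((e (Suc k) \<otimes> e j) \<otimes> g j)" using c L by (simp add: m_assoc)
    also have "\<dots> = g k \<otimes> (e (Suc k) \<otimes> (e j \<otimes> g j))" using c by (simp add: m_assoc)
    also have "\<dots> = \<zero>" using h[of j] c by simp
    finally show ?thesis .
  qed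
  have ord2: "g j \<otimes> g k = \<zero>" if "k < j" for k j
  proof -
    have c: "e j \<in> carrier R" "e (Suc k) \<in> carrier R" "g k \<in> carrier R" "g j \<in> carrier R" using h[of j] h[of k] h[of "Suc k"] by auto
    have L: "e j \<otimes> e (Suc k) = e (Suc k)" "e (Suc k) \<otimes> e j = e (Suc k)" using le[of "Suc k" j] that by auto
    have "g j \<otimes> g k = g j \<otimes> (e (Suc k) \<otimes> g k)" using eg by simp
    also have "\<dots> = (g j \<otimes> (e j \<otimes> e (Suc k))) \<otimes> g k" using c L by (simp add: m_assoc)
    also have "\<dots> = ((g j \<otimes> e j) \<otimes> e (Suc k)) \<otimes> g k" using c by (simp add: m_assoc)
    also have "\<dots> = \<zero>" using h[of j] c by simp
    finally show ?thesis .
  qed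
  show "g k \<otimes> g j = \<zero>" if "k \<noteq> j" for k j
    using that ord ord2 by (cases "k < j") (auto simp: not_less_iff_gr_or_eq)
qed

end

lemma dsum_carrier: "v \<in> carrier (dsum M \<Lambda>) \<longleftrightarrow> v \<in> extensional \<Lambda> \<and> (\<forall>i\<in>\<Lambda>. v i \<in> carrier M) \<and> finite {i\<in>\<Lambda>. v i \<noteq> \<zero>\<^bsub>M\<^esub>}"
  by (simp add: dsum_def)
lemma dsum_add: "v \<oplus>\<^bsub>dsum M \<Lambda>\<^esub> w = (\<lambda>i\<in>\<Lambda>. v i \<oplus>\<^bsub>M\<^esub> w i)"
  by (simp add: dsum_def)
lemma dsum_rs: "rsmult (dsum M \<Lambda>) v r = (\<lambda>i\<in>\<Lambda>. rsmult M (v i) r)"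
  by (simp add: dsum_def)
lemma dsum_zero: "\<zero>\<^bsub>dsum M \<Lambda>\<^esub> = (\<lambda>i\<in>\<Lambda>. \<zero>\<^bsub>M\<^esub>)"
  by (simp add: dsum_def)

context ring begin

lemma rhom_kill:
  assumes reg: "\<forall>a\<in>carrier R. \<exists>x\<in>carrier R. a \<otimes> x \<otimes> a = a"
    and m: "right_module R M" and I: "right_ideal I R" and f: "rhom_on R I (dsum M \<Lambda>) f"
    and z: "z \<in> I" "z \<in> Ann R M"
  shows "f z = (\<lambda>i\<in>\<Lambda>. \<zero>\<^bsub>M\<^esub>)"
proof -
  have zc: "z \<in> carrier R" using z ri_carr[OF I] by auto
  obtain w where w: "w \<in> carrier R" "z \<otimes> w \<otimes> z = z" using reg zc by blast
  have wz: "w \<otimes> z \<in> Ann R M" using ideal.I_l_closed[OF Ann_ideal[OF m] z(2) w(1)] .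
  have wzc: "w \<otimes> z \<in> carrier R" using w zc by simp
  have "f z = f (z \<otimes> (w \<otimes> z))" using w zc by (simp add: m_assoc)
  also have "\<dots> = rsmult (dsum M \<Lambda>) (f z) (w \<otimes> z)" using f z(1) wzc unfolding rhom_on_def by blast
  also have "\<dots> = (\<lambda>i\<in>\<Lambda>. rsmult M (f z i) (w \<otimes> z))" by (simp add: dsum_rs)
  also have "\<dots> = (\<lambda>i\<in>\<Lambda>. \<zero>\<^bsub>M\<^esub>)"
  proof (rule restrict_ext)
    fix i assume i: "i \<in> \<Lambda>"
    have "f z \<in> carrier (dsum M \<Lambda>)" using f z(1) unfolding rhom_on_def by blast
    hence "f z i \<in> carrier M" using i dsum_carrier by blast
    thus "rsmult M (f z i) (w \<otimes> z) = \<zero>\<^bsub>M\<^esub>" using AnnD[OF wz] by blast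
  qed
  finally show ?thesis .
qed

lemma rev_dir:
  assumes reg: "\<forall>a\<in>carrier R. \<exists>x\<in>carrier R. a \<otimes> x \<otimes> a = a"
    and m: "right_module R M" and dcc: "dccA R (Ann R M)"
  shows "aleph0_injective R (dsum M \<Lambda>)"
  unfolding aleph0_injective_def
proof (intro allI impI)
  fix I f assume h: "countably_generated_right_ideal I R \<and> rhom_on R I (dsum M \<Lambda>) f"
  define A where "A = Ann R M"
  have Aid: "ideal A R" unfolding A_def by (rule Ann_ideal[OF m])
  interpret M: abelian_group M using rm_ag[OF m] .
  have f: "rhom_on R I (dsum M \<Lambda>) f" using h by blast
  obtain S where S: "countable S" "S \<subseteq> carrier R" "I = right_ideal_gen R S"
    using h unfolding countably_generated_right_ideal_def by blast
  have I: "right_ideal I R" using gen_ri[OF S(2)] S(3) by simp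
  have SI: "S \<subseteq> I" using gen_sub S(3) by blast
  define s where "s n = (if S = {} then \<zero> else from_nat_into S n)" for n
  have s: "s n \<in> I" for n
  proof (cases "S = {}")
    case True thus ?thesis unfolding s_def using ri_zero[OF I] by simp
  next
    case False thus ?thesis unfolding s_def using from_nat_into[OF False] SI by auto
  qed
  have Ss: "S \<subseteq> range s"
  proof
    fix y assume y: "y \<in> S"
    hence ne: "S \<noteq> {}" by auto
    obtain n where "from_nat_into S n = y" using from_nat_into_surj[OF S(1) y] by blast
    thus "y \<in> range s" unfolding s_def using ne by auto
  qed
  have sc: "s n \<in> carrier R" for n using s ri_carr[OF I] by blast
  define e where "e = rec_nat \<zero> (\<lambda>n x. x \<oplus> stp R x (s n))"
  define g where "g n = stp R (e n) (s n)" for n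
  have e0: "e 0 = \<zero>" unfolding e_def by simp
  have eS: "e (Suc n) = e n \<oplus> g n" for n unfolding e_def g_def by simp
  have inv: "e n \<in> carrier R \<and> e n \<otimes> e n = e n \<and> e n \<in> I \<and> stepP R (e n) (s n) (g n)" for n
  proof (induction n)
    case 0
    have "e 0 \<in> carrier R \<and> e 0 \<otimes> e 0 = e 0 \<and> e 0 \<in> I" using e0 ri_zero[OF I] by simp
    thus ?case using stp_ok[OF reg _ _ sc] unfolding g_def by blast
  next
    case (Suc n)
    have en: "e n \<in> carrier R" "e n \<otimes> e n = e n" "e n \<in> I" using Suc by auto
    have st: "stepP R (e n) (s n) (g n)" using Suc by blast
    hence gn: "g n \<in> carrier R" "g n \<otimes> g n = g n" "e n \<otimes> g n = \<zero>" "g n \<otimes> e n = \<zero>" "g n \<in> I"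
      using en(3) s[of n] I unfolding stepP_def by auto
    have c: "e (Suc n) \<in> carrier R" using eS en gn by simp
    have i: "e (Suc n) \<otimes> e (Suc n) = e (Suc n)" unfolding eS using en gn by (simp add: l_distr r_distr)
    have j: "e (Suc n) \<in> I" unfolding eS using ri_add[OF I en(3) gn(5)] .
    show ?case using c i j stp_ok[OF reg c i sc] unfolding g_def by blast
  qed
  have hch: "e n \<in> carrier R \<and> e n \<otimes> e n = e n \<and> g n \<in> carrier R \<and> g n \<otimes> g n = g n
      \<and> e n \<otimes> g n = \<zero> \<and> g n \<otimes> e n = \<zero> \<and> e (Suc n) = e n \<oplus> g n" for n
    using inv[of n] eS[of n] unfolding stepP_def by auto
  have ec: "e n \<in> carrier R" for n using inv by blast
  have le: "e n \<otimes> e m = e m" "e m \<otimes> e n = e m" if "m \<le> n" for m n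
    using up_chain_le[of e g, OF hch that] by auto
  have es: "e (Suc k) \<otimes> s k = s k" for k
    using inv[of k] eS[of k] unfolding stepP_def by auto
  have esk: "e m \<otimes> s k = s k" if "k < m" for k m
  proof -
    have "e m \<otimes> s k = e m \<otimes> (e (Suc k) \<otimes> s k)" using es by simp
    also have "\<dots> = (e m \<otimes> e (Suc k)) \<otimes> s k" using ec sc by (simp add: m_assoc)
    also have "\<dots> = s k" using le[of "Suc k" m] that es by simp
    finally show ?thesis .
  qed
  have mono_fix: "e n \<otimes> x = x" if "e m \<otimes> x = x" "m \<le> n" "x \<in> carrier R" for m n x
  proof -
    have "e n \<otimes> x = e n \<otimes> (e m \<otimes> x)" using that by simp
    also have "\<dots> = (e n \<otimes> e m) \<otimes> x" using ec that by (simp add: m_assoc)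
    also have "\<dots> = x" using le[OF that(2)] that by simp
    finally show ?thesis .
  qed
  define T where "T = {x \<in> carrier R. \<exists>m. e m \<otimes> x = x}"
  have T: "right_ideal T R"
  proof (rule right_idealI')
    show "T \<subseteq> carrier R" unfolding T_def by blast
    have "e 0 \<otimes> \<zero> = \<zero>" using ec[of 0] by simp
    thus "\<zero> \<in> T" unfolding T_def by blast
  next
    fix x y assume "x \<in> T" "y \<in> T"
    then obtain a b where x: "x \<in> carrier R" "e a \<otimes> x = x" and y: "y \<in> carrier R" "e b \<otimes> y = y"
      unfolding T_def by blast
    have "e (max a b) \<otimes> x = x" "e (max a b) \<otimes> y = y" using mono_fix x y by auto
    hence "e (max a b) \<otimes> (x \<oplus> y) = x \<oplus> y" using x y ec by (simp add: r_distr)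
    thus "x \<oplus> y \<in> T" unfolding T_def using x y by blast
  next
    fix x assume "x \<in> T"
    then obtain a where x: "x \<in> carrier R" "e a \<otimes> x = x" unfolding T_def by blast
    hence "e a \<otimes> (\<ominus> x) = \<ominus> x" using ec by (simp add: r_minus)
    thus "\<ominus> x \<in> T" unfolding T_def using x by blast
  next
    fix x r assume "x \<in> T" "r \<in> carrier R"
    then obtain a where x: "x \<in> carrier R" "e a \<otimes> x = x" and r: "r \<in> carrier R" unfolding T_def by blast
    hence "e a \<otimes> (x \<otimes> r) = x \<otimes> r" using ec by (simp add: m_assoc[symmetric])
    thus "x \<otimes> r \<in> T" unfolding T_def using x r by blast
  qed
  have "S \<subseteq> T"
  proof
    fix y assume "y \<in> S"
    then obtain k where "y = s k" using Ss by blast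
    thus "y \<in> T" unfolding T_def using esk[of k "Suc k"] sc by blast
  qed
  hence IT: "I \<subseteq> T" using gen_min[OF T] S(3) by simp
  define Iq where "Iq n = {x \<in> carrier R. e n \<otimes> x \<in> A}" for n
  have Aas: "additive_subgroup A R" using Aid ideal.axioms(1) by blast
  have Iq: "right_ideal (Iq n) R \<and> A \<subseteq> Iq n" for n
  proof
    show "right_ideal (Iq n) R"
    proof (rule right_idealI')
      show "Iq n \<subseteq> carrier R" unfolding Iq_def by blast
      show "\<zero> \<in> Iq n" unfolding Iq_def using ec additive_subgroup.zero_closed[OF Aas] by simp
    next
      fix x y assume "x \<in> Iq n" "y \<in> Iq n"
      thus "x \<oplus> y \<in> Iq n" unfolding Iq_def using ec additive_subgroup.a_closed[OF Aas] by (simp add: r_distr)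
    next
      fix x assume "x \<in> Iq n"
      thus "\<ominus> x \<in> Iq n" unfolding Iq_def using ec additive_subgroup.a_inv_closed[OF Aas] by (simp add: r_minus)
    next
      fix x r assume "x \<in> Iq n" "r \<in> carrier R"
      thus "x \<otimes> r \<in> Iq n" unfolding Iq_def using ec ideal.I_r_closed[OF Aid] by (simp add: m_assoc[symmetric])
    qed
    show "A \<subseteq> Iq n" unfolding Iq_def using ec ideal.I_l_closed[OF Aid] ideal.Icarr[OF Aid] by blast
  qed
  have IqI: "x \<in> Iq n" if "x \<in> carrier R" "e n \<otimes> x \<in> A" for x n
    unfolding Iq_def using that by (rule CollectI[of _ x, OF conjI])
  have Iqd: "Iq (Suc n) \<subseteq> Iq n" for n
  proof
    fix x assume "x \<in> Iq (Suc n)"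
    hence x: "x \<in> carrier R" "e (Suc n) \<otimes> x \<in> A" unfolding Iq_def by auto
    have "e n \<otimes> x = e n \<otimes> (e (Suc n) \<otimes> x)" using le[of n "Suc n"] ec x by (simp add: m_assoc[symmetric])
    also have "\<dots> \<in> A" using ideal.I_l_closed[OF Aid x(2) ec] .
    finally show "x \<in> Iq n" unfolding Iq_def using x by simp
  qed
  obtain N where N: "\<forall>m\<ge>N. Iq m = Iq N" using dcc Iq Iqd unfolding dccA_def A_def by blast
  have diffA: "e m \<ominus> e N \<in> A" if "m \<ge> N" for m
  proof -
    have eq0: "e N \<otimes> (\<one> \<ominus> e N) = \<zero>" using inv[of N] by (simp add: ring_simprules)
    have c1: "\<one> \<ominus> e N \<in> carrier R" using ec[of N] by simp
    have z0: "\<zero> \<in> A" using additive_subgroup.zero_closed[OF Aas] .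
    have "e N \<otimes> (\<one> \<ominus> e N) \<in> A" unfolding eq0 by (rule z0)
    hence "\<one> \<ominus> e N \<in> Iq N" by (rule IqI[OF c1])
    moreover have "Iq m = Iq N" using N that by blast
    ultimately have "\<one> \<ominus> e N \<in> Iq m" by simp
    hence "e m \<otimes> (\<one> \<ominus> e N) \<in> A" unfolding Iq_def by simp
    moreover have "e m \<otimes> (\<one> \<ominus> e N) = e m \<ominus> e N" using le[OF that] ec by (simp add: ring_simprules)
    ultimately show ?thesis by simp
  qed
  define G where "G x = f (e N \<otimes> x)" for x
  have eNI: "e N \<otimes> x \<in> I" if "x \<in> carrier R" for x using ri_mult[OF I _ that] inv by blast
  have fc: "f x \<in> carrier (dsum M \<Lambda>)" if "x \<in> I" for x using f that unfolding rhom_on_def by blast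
  have fadd: "f (x \<oplus> y) = f x \<oplus>\<^bsub>dsum M \<Lambda>\<^esub> f y" if "x \<in> I" "y \<in> I" for x y using f that unfolding rhom_on_def by blast
  have fmul: "f (x \<otimes> r) = rsmult (dsum M \<Lambda>) (f x) r" if "x \<in> I" "r \<in> carrier R" for x r using f that unfolding rhom_on_def by blast
  have "rhom_on R (carrier R) (dsum M \<Lambda>) G"
    unfolding rhom_on_def
  proof (intro conjI ballI)
    fix x assume x: "x \<in> carrier R"
    show "G x \<in> carrier (dsum M \<Lambda>)" unfolding G_def using fc eNI x by blast
    fix y assume y: "y \<in> carrier R"
    have "e N \<otimes> (x \<oplus> y) = e N \<otimes> x \<oplus> e N \<otimes> y" using x y ec by (simp add: r_distr)
    thus "G (x \<oplus> y) = G x \<oplus>\<^bsub>dsum M \<Lambda>\<^esub> G y" unfolding G_def using fadd eNI x y by simp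
  next
    fix x r assume x: "x \<in> carrier R" and r: "r \<in> carrier R"
    have "e N \<otimes> (x \<otimes> r) = (e N \<otimes> x) \<otimes> r" using x r ec by (simp add: m_assoc)
    thus "G (x \<otimes> r) = rsmult (dsum M \<Lambda>) (G x) r" unfolding G_def using fmul eNI x r by simp
  qed
  moreover have "\<forall>x\<in>I. G x = f x"
  proof
    fix x assume x: "x \<in> I"
    have xc: "x \<in> carrier R" using x ri_carr[OF I] by blast
    obtain m0 where m0: "e m0 \<otimes> x = x" using x IT unfolding T_def by blast
    define m where "m = max m0 N"
    have mN: "m \<ge> N" unfolding m_def by simp
    have em: "e m \<otimes> x = x" using mono_fix[OF m0 _ xc] unfolding m_def by simp
    define z where "z = x \<ominus> e N \<otimes> x"
    have "z = (e m \<ominus> e N) \<otimes> x" unfolding z_def using em ec xc by (simp add: ring_simprules)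
    hence zA: "z \<in> Ann R M" using ideal.I_r_closed[OF Aid diffA[OF mN] xc] unfolding A_def by simp
    have zI: "z \<in> I" unfolding z_def using ri_minus[OF I x eNI[OF xc]] .
    have xz: "x = e N \<otimes> x \<oplus> z" unfolding z_def using ec xc by (simp add: ring_simprules)
    have "f x = f (e N \<otimes> x) \<oplus>\<^bsub>dsum M \<Lambda>\<^esub> f z" using fadd[OF eNI[OF xc] zI] xz by simp
    also have "\<dots> = (\<lambda>i\<in>\<Lambda>. f (e N \<otimes> x) i \<oplus>\<^bsub>M\<^esub> \<zero>\<^bsub>M\<^esub>)"
      using rhom_kill[OF reg m I f zI zA] by (simp add: dsum_add) (rule restrict_ext, simp)
    also have "\<dots> = f (e N \<otimes> x)"
    proof
      fix i
      have v: "f (e N \<otimes> x) \<in> carrier (dsum M \<Lambda>)" using fc[OF eNI[OF xc]] .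
      hence v1: "f (e N \<otimes> x) \<in> extensional \<Lambda>" and v2: "\<forall>i\<in>\<Lambda>. f (e N \<otimes> x) i \<in> carrier M"
        unfolding dsum_carrier by auto
      show "(\<lambda>i\<in>\<Lambda>. f (e N \<otimes> x) i \<oplus>\<^bsub>M\<^esub> \<zero>\<^bsub>M\<^esub>) i = f (e N \<otimes> x) i"
      proof (cases "i \<in> \<Lambda>")
        case True thus ?thesis using v2 by simp
      next
        case False thus ?thesis using extensional_arb[OF v1 False] by simp
      qed
    qed
    finally show "G x = f x" unfolding G_def by simp
  qed
  ultimately show "\<exists>g. rhom_on R (carrier R) (dsum M \<Lambda>) g \<and> (\<forall>x\<in>I. g x = f x)" by blast
qed

end

context ring begin

lemma not_inj:
  fixes g :: "nat \<Rightarrow> 'a"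
  assumes m: "right_module R M" and inf: "infinite (UNIV :: 'i set)"
    and g: "\<And>k. g k \<in> carrier R \<and> g k \<otimes> g k = g k"
    and orth: "\<And>k j. k \<noteq> j \<Longrightarrow> g k \<otimes> g j = \<zero>"
    and infA: "infinite {k. g k \<notin> Ann R M}"
  shows "\<not> sigma_aleph0_injective TYPE('i) R M"
proof
  assume sig: "sigma_aleph0_injective TYPE('i) R M"
  interpret M: abelian_group M using rm_ag[OF m] .
  obtain \<iota> :: "nat \<Rightarrow> 'i" where \<iota>: "inj \<iota>" using infinite_countable_subset[OF inf] by blast
  define \<Lambda> where "\<Lambda> = range \<iota>"
  have inj0: "aleph0_injective R (dsum M \<Lambda>)" using sig unfolding sigma_aleph0_injective_def by blast
  have gc: "g k \<in> carrier R" for k using g by blast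
  define mm where "mm k = (if \<exists>x\<in>carrier M. rsmult M x (g k) \<noteq> \<zero>\<^bsub>M\<^esub>
      then SOME x. x \<in> carrier M \<and> rsmult M x (g k) \<noteq> \<zero>\<^bsub>M\<^esub> else \<zero>\<^bsub>M\<^esub>)" for k
  have mmc: "mm k \<in> carrier M" for k
  proof (cases "\<exists>x\<in>carrier M. rsmult M x (g k) \<noteq> \<zero>\<^bsub>M\<^esub>")
    case True
    hence "\<exists>x. x \<in> carrier M \<and> rsmult M x (g k) \<noteq> \<zero>\<^bsub>M\<^esub>" by (simp only: Bex_def)
    have "mm k = (SOME x. x \<in> carrier M \<and> rsmult M x (g k) \<noteq> \<zero>\<^bsub>M\<^esub>)"
      unfolding mm_def by (rule if_P[OF True])
    with someI_ex[OF \<open>\<exists>x. _\<close>] show ?thesis by argo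
  next
    case False
    have "mm k = \<zero>\<^bsub>M\<^esub>" unfolding mm_def by (rule if_not_P[OF False])
    thus ?thesis by simp
  qed
  have mmg: "rsmult M (mm k) (g k) \<noteq> \<zero>\<^bsub>M\<^esub>" if "g k \<notin> Ann R M" for k
  proof -
    have True: "\<exists>x\<in>carrier M. rsmult M x (g k) \<noteq> \<zero>\<^bsub>M\<^esub>"
    proof (rule ccontr)
      assume "\<not> (\<exists>x\<in>carrier M. rsmult M x (g k) \<noteq> \<zero>\<^bsub>M\<^esub>)"
      hence "g k \<in> Ann R M" using gc by (intro AnnI) auto
      thus False using that by simp
    qed
    hence "\<exists>x. x \<in> carrier M \<and> rsmult M x (g k) \<noteq> \<zero>\<^bsub>M\<^esub>" by (simp only: Bex_def)
    have "mm k = (SOME x. x \<in> carrier M \<and> rsmult M x (g k) \<noteq> \<zero>\<^bsub>M\<^esub>)"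
      unfolding mm_def by (rule if_P[OF True])
    with someI_ex[OF \<open>\<exists>x. _\<close>] show ?thesis by argo
  qed
  define h where "h k x = rsmult M (mm k) (g k \<otimes> x)" for k x
  have hc: "h k x \<in> carrier M" if "x \<in> carrier R" for k x
    unfolding h_def using rm_closed[OF m mmc] gc that by simp
  have h0: "h k \<zero> = \<zero>\<^bsub>M\<^esub>" for k unfolding h_def using gc rm_zero_r[OF m mmc] by simp
  have hadd: "h k (x \<oplus> y) = h k x \<oplus>\<^bsub>M\<^esub> h k y" if "x \<in> carrier R" "y \<in> carrier R" for k x y
    unfolding h_def using that gc rm_dr[OF m mmc] by (simp add: r_distr)
  have hneg: "h k (\<ominus> x) = \<ominus>\<^bsub>M\<^esub> h k x" if "x \<in> carrier R" for k x
    unfolding h_def using that gc rm_neg_r[OF m mmc] by (simp add: r_minus)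
  have hmul: "h k (x \<otimes> r) = rsmult M (h k x) r" if "x \<in> carrier R" "r \<in> carrier R" for k x r
    unfolding h_def using that gc rm_assoc[OF m mmc] by (simp add: m_assoc)
  define T where "T = {x \<in> carrier R. finite {k. h k x \<noteq> \<zero>\<^bsub>M\<^esub>}}"
  have T: "right_ideal T R"
  proof (rule right_idealI')
    show "T \<subseteq> carrier R" unfolding T_def by blast
    show "\<zero> \<in> T" unfolding T_def using h0 by simp
  next
    fix x y assume "x \<in> T" "y \<in> T"
    hence x: "x \<in> carrier R" "finite {k. h k x \<noteq> \<zero>\<^bsub>M\<^esub>}" and y: "y \<in> carrier R" "finite {k. h k y \<noteq> \<zero>\<^bsub>M\<^esub>}"
      unfolding T_def by auto
    have "{k. h k (x \<oplus> y) \<noteq> \<zero>\<^bsub>M\<^esub>} \<subseteq> {k. h k x \<noteq> \<zero>\<^bsub>M\<^esub>} \<union> {k. h k y \<noteq> \<zero>\<^bsub>M\<^esub>}"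
      using hadd[OF x(1) y(1)] by auto
    hence "finite {k. h k (x \<oplus> y) \<noteq> \<zero>\<^bsub>M\<^esub>}" using x y finite_subset by blast
    thus "x \<oplus> y \<in> T" unfolding T_def using x y by simp
  next
    fix x assume "x \<in> T"
    hence x: "x \<in> carrier R" "finite {k. h k x \<noteq> \<zero>\<^bsub>M\<^esub>}" unfolding T_def by auto
    have "{k. h k (\<ominus> x) \<noteq> \<zero>\<^bsub>M\<^esub>} \<subseteq> {k. h k x \<noteq> \<zero>\<^bsub>M\<^esub>}"
      using hneg[OF x(1)] by auto
    hence "finite {k. h k (\<ominus> x) \<noteq> \<zero>\<^bsub>M\<^esub>}" using x finite_subset by blast
    thus "\<ominus> x \<in> T" unfolding T_def using x by simp
  next
    fix x r assume "x \<in> T" and r: "r \<in> carrier R"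
    hence x: "x \<in> carrier R" "finite {k. h k x \<noteq> \<zero>\<^bsub>M\<^esub>}" unfolding T_def by auto
    have "{k. h k (x \<otimes> r) \<noteq> \<zero>\<^bsub>M\<^esub>} \<subseteq> {k. h k x \<noteq> \<zero>\<^bsub>M\<^esub>}"
      using hmul[OF x(1) r] rm_zero_l[OF m r] by auto
    hence "finite {k. h k (x \<otimes> r) \<noteq> \<zero>\<^bsub>M\<^esub>}" using x finite_subset by blast
    thus "x \<otimes> r \<in> T" unfolding T_def using x r by simp
  qed
  have "range g \<subseteq> T"
  proof
    fix y assume "y \<in> range g"
    then obtain j where j: "y = g j" by blast
    have "{k. h k (g j) \<noteq> \<zero>\<^bsub>M\<^esub>} \<subseteq> {j}"
    proof
      fix k assume k: "k \<in> {k. h k (g j) \<noteq> \<zero>\<^bsub>M\<^esub>}"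
      show "k \<in> {j}"
      proof (rule ccontr)
        assume "k \<notin> {j}"
        hence "g k \<otimes> g j = \<zero>" using orth by simp
        hence "h k (g j) = \<zero>\<^bsub>M\<^esub>" unfolding h_def using rm_zero_r[OF m mmc] by simp
        thus False using k by simp
      qed
    qed
    hence "finite {k. h k (g j) \<noteq> \<zero>\<^bsub>M\<^esub>}" using finite_subset by blast
    thus "y \<in> T" unfolding T_def j using gc by simp
  qed
  define I where "I = right_ideal_gen R (range g)"
  have rg: "range g \<subseteq> carrier R" using gc by blast
  have I: "right_ideal I R" unfolding I_def using gen_ri[OF rg] .
  have IT: "I \<subseteq> T" unfolding I_def using gen_min[OF T \<open>range g \<subseteq> T\<close>] .
  have cg: "countably_generated_right_ideal I R"
    unfolding countably_generated_right_ideal_def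
  proof (intro conjI exI)
    show "countable (range g)" by (rule countable_image[OF countableI_type])
  qed (use I rg I_def in auto)
  define F where "F x = (\<lambda>i\<in>\<Lambda>. h (inv_into UNIV \<iota> i) x)" for x
  have invi: "inv_into UNIV \<iota> (\<iota> k) = k" for k using \<iota> by (simp add: inv_into_f_f)
  have Fc: "F x \<in> carrier (dsum M \<Lambda>)" if "x \<in> I" for x
  proof -
    have x: "x \<in> carrier R" "finite {k. h k x \<noteq> \<zero>\<^bsub>M\<^esub>}" using that IT unfolding T_def by auto
    have "{i\<in>\<Lambda>. F x i \<noteq> \<zero>\<^bsub>M\<^esub>} \<subseteq> \<iota> ` {k. h k x \<noteq> \<zero>\<^bsub>M\<^esub>}"
      unfolding F_def \<Lambda>_def using invi by auto
    hence "finite {i\<in>\<Lambda>. F x i \<noteq> \<zero>\<^bsub>M\<^esub>}" using x(2) finite_subset by blast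
    moreover have "F x \<in> extensional \<Lambda>" unfolding F_def by simp
    moreover have "\<forall>i\<in>\<Lambda>. F x i \<in> carrier M" unfolding F_def using hc x(1) by simp
    ultimately show ?thesis unfolding dsum_carrier by blast
  qed
  have Ic: "x \<in> carrier R" if "x \<in> I" for x using that ri_carr[OF I] by blast
  have "rhom_on R I (dsum M \<Lambda>) F"
    unfolding rhom_on_def
  proof (intro conjI ballI)
    fix x assume x: "x \<in> I"
    show "F x \<in> carrier (dsum M \<Lambda>)" using Fc[OF x] .
    fix y assume y: "y \<in> I"
    show "F (x \<oplus> y) = F x \<oplus>\<^bsub>dsum M \<Lambda>\<^esub> F y"
      unfolding F_def dsum_add by (rule restrict_ext) (simp add: hadd Ic x y)
  next
    fix x r assume x: "x \<in> I" and r: "r \<in> carrier R"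
    show "F (x \<otimes> r) = rsmult (dsum M \<Lambda>) (F x) r"
      unfolding F_def dsum_rs by (rule restrict_ext) (simp add: hmul Ic x r)
  qed
  then obtain G where G: "rhom_on R (carrier R) (dsum M \<Lambda>) G" and GF: "\<forall>x\<in>I. G x = F x"
    using inj0 cg unfolding aleph0_injective_def by blast
  define y where "y = G \<one>"
  have yc: "y \<in> carrier (dsum M \<Lambda>)" unfolding y_def using G unfolding rhom_on_def by simp
  hence yfin: "finite {i\<in>\<Lambda>. y i \<noteq> \<zero>\<^bsub>M\<^esub>}" unfolding dsum_carrier by blast
  have Gx: "G x = rsmult (dsum M \<Lambda>) y x" if "x \<in> carrier R" for x
  proof -
    have Gm: "\<forall>a\<in>carrier R. \<forall>r\<in>carrier R. G (a \<otimes> r) = rsmult (dsum M \<Lambda>) (G a) r"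
      using G unfolding rhom_on_def by (elim conjE)
    have "G (\<one> \<otimes> x) = rsmult (dsum M \<Lambda>) (G \<one>) x" using Gm[rule_format, OF one_closed that] .
    thus ?thesis unfolding y_def using that by simp
  qed
  have "finite (\<iota> -` {i\<in>\<Lambda>. y i \<noteq> \<zero>\<^bsub>M\<^esub>})" using finite_vimageI[OF yfin \<iota>] .
  hence "infinite ({k. g k \<notin> Ann R M} - \<iota> -` {i\<in>\<Lambda>. y i \<noteq> \<zero>\<^bsub>M\<^esub>})" using infA by simp
  then obtain k where k: "g k \<notin> Ann R M" "\<iota> k \<notin> {i\<in>\<Lambda>. y i \<noteq> \<zero>\<^bsub>M\<^esub>}"
    using infinite_imp_nonempty by blast
  have ik: "\<iota> k \<in> \<Lambda>" unfolding \<Lambda>_def by simp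
  hence yk: "y (\<iota> k) = \<zero>\<^bsub>M\<^esub>" using k(2) by simp
  have gkI: "g k \<in> I" unfolding I_def using gen_sub[of "range g"] rangeI[of g k] by (rule subsetD)
  have "G (g k) (\<iota> k) = rsmult M (y (\<iota> k)) (g k)" using Gx[OF gc] ik by (simp add: dsum_rs)
  also have "\<dots> = \<zero>\<^bsub>M\<^esub>" using yk rm_zero_l[OF m gc] by simp
  finally have "G (g k) (\<iota> k) = \<zero>\<^bsub>M\<^esub>" .
  moreover have "G (g k) (\<iota> k) = rsmult M (mm k) (g k)" using GF gkI ik invi g[of k] unfolding F_def h_def by simp
  ultimately show False using mmg[OF k(1)] by simp
qed

end

lemma chain_inf:
  fixes I :: "nat \<Rightarrow> 'x"
  assumes nc: "\<not> (\<exists>n. \<forall>m\<ge>n. I m = I n)"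
  shows "infinite {n. I n \<noteq> I (Suc n)}"
proof
  assume fin: "finite {n. I n \<noteq> I (Suc n)}"
  obtain B where B: "\<forall>n\<in>{n. I n \<noteq> I (Suc n)}. n < B"
    using finite_nat_set_iff_bounded[THEN iffD1, OF fin] by (elim exE)
  have eqB: "B \<le> m \<Longrightarrow> I m = I B" for m
  proof (induction m rule: dec_induct)
    case base thus ?case by simp
  next
    case (step k)
    have "\<not> (k < B)" using step.hyps(1) by simp
    hence "k \<notin> {n. I n \<noteq> I (Suc n)}" using B by auto
    hence "I (Suc k) = I k" by simp
    thus ?case using step.IH by simp
  qed
  have "\<forall>m\<ge>B. I m = I B" using eqB by blast
  hence "\<exists>n. \<forall>m\<ge>n. I m = I n" by (rule exI)
  thus False using nc by simp
qed

context ring begin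

lemma pair_idem:
  assumes c: "e \<in> carrier R" "f \<in> carrier R" and ee: "e \<otimes> e = e" and ff: "f \<otimes> f = f"
    and ef: "e \<otimes> f = f" and fe: "f \<otimes> e = f"
  shows "(\<one> \<ominus> e) \<in> carrier R \<and> (\<one> \<ominus> e) \<otimes> (\<one> \<ominus> e) = \<one> \<ominus> e \<and> (e \<ominus> f) \<in> carrier R
    \<and> (e \<ominus> f) \<otimes> (e \<ominus> f) = e \<ominus> f
    \<and> (\<one> \<ominus> e) \<otimes> (e \<ominus> f) = \<zero> \<and> (e \<ominus> f) \<otimes> (\<one> \<ominus> e) = \<zero> \<and> \<one> \<ominus> f = (\<one> \<ominus> e) \<oplus> (e \<ominus> f)"
proof -
  have ee2: "e \<otimes> (e \<otimes> z) = e \<otimes> z" if "z \<in> carrier R" for z using c ee that by (simp add: m_assoc[symmetric])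
  have ff2: "f \<otimes> (f \<otimes> z) = f \<otimes> z" if "z \<in> carrier R" for z using c ff that by (simp add: m_assoc[symmetric])
  have ef2: "e \<otimes> (f \<otimes> z) = f \<otimes> z" if "z \<in> carrier R" for z using c ef that by (simp add: m_assoc[symmetric])
  have fe2: "f \<otimes> (e \<otimes> z) = f \<otimes> z" if "z \<in> carrier R" for z using c fe that by (simp add: m_assoc[symmetric])
  show ?thesis using c ee ff ef fe ee2 ff2 ef2 fe2 by (simp add: ring_simprules)
qed

lemma fwd_dir:
  assumes reg: "\<forall>a\<in>carrier R. \<exists>x\<in>carrier R. a \<otimes> x \<otimes> a = a"
    and m: "right_module R M" and inf: "infinite (UNIV :: 'i set)"
    and sig: "sigma_aleph0_injective TYPE('i) R M"
  shows "dccA R (Ann R M)"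
proof (rule ccontr)
  assume nd: "\<not> dccA R (Ann R M)"
  define A where "A = Ann R M"
  have Aid: "ideal A R" unfolding A_def by (rule Ann_ideal[OF m])
  have Ac: "a \<in> carrier R" if "a \<in> A" for a using ideal.Icarr[OF Aid that] .
  obtain I :: "nat \<Rightarrow> 'a set" where I: "\<And>n. right_ideal (I n) R" "\<And>n. A \<subseteq> I n"
    and dec: "\<And>n. I (Suc n) \<subseteq> I n" and nc: "\<not> (\<exists>n. \<forall>m\<ge>n. I m = I n)"
    using nd unfolding dccA_def A_def by auto
  define PA where "PA e = {e \<otimes> r \<oplus> a | r a. r \<in> carrier R \<and> a \<in> A}" for e
  show False
  proof (cases "\<exists>J. right_ideal J R \<and> (\<forall>e\<in>J. e \<otimes> e = e \<longrightarrow> \<not> J \<subseteq> PA e)")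
    case True
    then obtain J where J: "right_ideal J R" and Jn: "\<And>e. e \<in> J \<Longrightarrow> e \<otimes> e = e \<Longrightarrow> \<not> J \<subseteq> PA e" by blast
    have Jc: "x \<in> carrier R" if "x \<in> J" for x using ri_carr[OF J] that by blast
    define pick where "pick e = (SOME x. x \<in> J \<and> x \<notin> PA e)" for e
    have pk: "pick e \<in> J \<and> pick e \<notin> PA e" if "e \<in> J" "e \<otimes> e = e" for e
    proof -
      have "\<exists>x. x \<in> J \<and> x \<notin> PA e" using Jn[OF that] by auto
      from someI_ex[OF this] show ?thesis unfolding pick_def .
    qed
    define es where "es n = ((\<lambda>e. e \<oplus> stp R e (pick e)) ^^ n) \<zero>" for n
    define gs where "gs n = stp R (es n) (pick (es n))" for n
    have es0: "es 0 = \<zero>" unfolding es_def by simp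
    have esS: "es (Suc n) = es n \<oplus> gs n" for n unfolding es_def gs_def by simp
    have inv: "es n \<in> J \<and> es n \<in> carrier R \<and> es n \<otimes> es n = es n \<and> stepP R (es n) (pick (es n)) (gs n)" for n
    proof (induction n)
      case 0
      have "es 0 \<in> J \<and> es 0 \<in> carrier R \<and> es 0 \<otimes> es 0 = es 0" using es0 ri_zero[OF J] by simp
      thus ?case using stp_ok[OF reg _ _ Jc] pk unfolding gs_def by blast
    next
      case (Suc n)
      have en: "es n \<in> carrier R" "es n \<otimes> es n = es n" "es n \<in> J" using Suc by auto
      have st: "stepP R (es n) (pick (es n)) (gs n)" using Suc by blast
      have pJ: "pick (es n) \<in> J" using pk[OF en(3,2)] by blast
      have gn: "gs n \<in> carrier R" "gs n \<otimes> gs n = gs n" "es n \<otimes> gs n = \<zero>" "gs n \<otimes> es n = \<zero>" "gs n \<in> J"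
        using st en(3) pJ J unfolding stepP_def by auto
      have c: "es (Suc n) \<in> carrier R" using esS en gn by simp
      have i: "es (Suc n) \<otimes> es (Suc n) = es (Suc n)" unfolding esS using en gn by (simp add: l_distr r_distr)
      have j: "es (Suc n) \<in> J" unfolding esS using ri_add[OF J en(3) gn(5)] .
      have "stepP R (es (Suc n)) (pick (es (Suc n))) (gs (Suc n))"
        unfolding gs_def using stp_ok[OF reg c i Jc] pk[OF j i] by blast
      thus ?case using c i j by blast
    qed
    have hch: "es n \<in> carrier R \<and> es n \<otimes> es n = es n \<and> gs n \<in> carrier R \<and> gs n \<otimes> gs n = gs n
      \<and> es n \<otimes> gs n = \<zero> \<and> gs n \<otimes> es n = \<zero> \<and> es (Suc n) = es n \<oplus> gs n" for n
      using inv[of n] esS[of n] unfolding stepP_def by auto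
    have orth: "gs k \<otimes> gs j = \<zero>" if "k \<noteq> j" for k j using up_chain_orth[of es gs, OF hch that] .
    have gsA: "gs n \<notin> Ann R M" for n
    proof
      assume gA: "gs n \<in> Ann R M"
      define e where "e = es n"
      define b where "b = pick e"
      have ec: "e \<in> carrier R" "e \<otimes> e = e" "e \<in> J" unfolding e_def using inv by auto
      have bJ: "b \<in> J" "b \<notin> PA e" unfolding b_def using pk[OF ec(3,2)] by auto
      have bc: "b \<in> carrier R" using Jc bJ by blast
      have st: "gs n \<otimes> ((\<one> \<ominus> e) \<otimes> b) = (\<one> \<ominus> e) \<otimes> b"
        using inv[of n] unfolding stepP_def e_def b_def by blast
      have "gs n \<otimes> ((\<one> \<ominus> e) \<otimes> b) \<in> A"
        using ideal.I_r_closed[OF Aid gA[folded A_def]] ec bc by simp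
      hence inA: "(\<one> \<ominus> e) \<otimes> b \<in> A" using st by simp
      have "b = e \<otimes> b \<oplus> (\<one> \<ominus> e) \<otimes> b" using ec bc by (simp add: ring_simprules)
      hence "b \<in> PA e" unfolding PA_def using inA bc by blast
      thus False using bJ by simp
    qed
    have "\<not> sigma_aleph0_injective TYPE('i) R M"
    proof (rule not_inj[OF m inf])
      show "gs k \<in> carrier R \<and> gs k \<otimes> gs k = gs k" for k using hch by blast
      show "gs k \<otimes> gs j = \<zero>" if "k \<noteq> j" for k j using orth[OF that] .
      show "infinite {k. gs k \<notin> Ann R M}" using gsA by simp
    qed
    thus False using sig by simp
  next
    case False
    hence C2: "\<And>J. right_ideal J R \<Longrightarrow> \<exists>e\<in>J. e \<otimes> e = e \<and> J \<subseteq> PA e" by blast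
    define P where "P e = {e \<otimes> r | r. r \<in> carrier R}" for e
    define ch where "ch J = (SOME e. e \<in> J \<and> e \<otimes> e = e \<and> J \<subseteq> PA e)" for J
    have chp: "ch J \<in> J \<and> ch J \<otimes> ch J = ch J \<and> J \<subseteq> PA (ch J)" if "right_ideal J R" for J
    proof -
      have "\<exists>e. e \<in> J \<and> e \<otimes> e = e \<and> J \<subseteq> PA e" using C2[OF that] by blast
      from someI_ex[OF this] show ?thesis unfolding ch_def .
    qed
    define es where "es = rec_nat (ch (I 0)) (\<lambda>n e. ch (I (Suc n) \<inter> P e) \<otimes> e)"
    have es0: "es 0 = ch (I 0)" unfolding es_def by simp
    have esS: "es (Suc n) = ch (I (Suc n) \<inter> P (es n)) \<otimes> es n" for n unfolding es_def by simp
    have Ic: "x \<in> carrier R" if "x \<in> I n" for x n using ri_carr[OF I(1)] that by blast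
    have Aas: "additive_subgroup A R" using Aid ideal.axioms(1) by blast
    have step: "es (Suc n) \<in> carrier R \<and> es (Suc n) \<otimes> es (Suc n) = es (Suc n) \<and> es (Suc n) \<in> I (Suc n)
        \<and> I (Suc n) \<subseteq> PA (es (Suc n)) \<and> es n \<otimes> es (Suc n) = es (Suc n) \<and> es (Suc n) \<otimes> es n = es (Suc n)"
      if Q: "es n \<in> carrier R" "es n \<otimes> es n = es n" "es n \<in> I n" "I n \<subseteq> PA (es n)" for n
    proof -
      define e where "e = es n"
      have e: "e \<in> carrier R" "e \<otimes> e = e" "I n \<subseteq> PA e" using Q unfolding e_def by auto
      define Jn where "Jn = I (Suc n) \<inter> P e"
      have Pe: "right_ideal (P e) R" unfolding P_def by (rule ri_principal[OF e(1)])
      have "right_ideal (\<Inter>{I (Suc n), P e}) R" by (rule ri_Inter) (use I(1) Pe in auto)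
      hence Jn: "right_ideal Jn R" unfolding Jn_def by simp
      define c where "c = ch Jn"
      have cp: "c \<in> Jn" "c \<otimes> c = c" "Jn \<subseteq> PA c" using chp[OF Jn] unfolding c_def by auto
      have cI: "c \<in> I (Suc n)" using cp(1) unfolding Jn_def by blast
      obtain r0 where r0: "r0 \<in> carrier R" "c = e \<otimes> r0" using cp(1) unfolding Jn_def P_def by blast
      have cc: "c \<in> carrier R" using r0 e by simp
      have ec: "e \<otimes> c = c" using r0 e by (simp add: m_assoc[symmetric])
      have ec2: "e \<otimes> (c \<otimes> z) = c \<otimes> z" if "z \<in> carrier R" for z using ec e cc that by (simp add: m_assoc[symmetric])
      have cc2: "c \<otimes> (c \<otimes> z) = c \<otimes> z" if "z \<in> carrier R" for z using cp(2) cc that by (simp add: m_assoc[symmetric])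
      have ee2: "e \<otimes> (e \<otimes> z) = e \<otimes> z" if "z \<in> carrier R" for z using e that by (simp add: m_assoc[symmetric])
      have eS: "es (Suc n) = c \<otimes> e" unfolding esS c_def Jn_def e_def ..
      have r1: "(c \<otimes> e) \<otimes> (c \<otimes> e) = c \<otimes> e" using e cc ec2 cc2 by (simp add: m_assoc)
      have r2: "e \<otimes> (c \<otimes> e) = c \<otimes> e" using ec2 e by simp
      have r3: "(c \<otimes> e) \<otimes> e = c \<otimes> e" using e cc by (simp add: m_assoc)
      have r4: "c \<otimes> e \<in> I (Suc n)" using ri_mult[OF I(1) cI e(1)] .
      have r5: "I (Suc n) \<subseteq> PA (c \<otimes> e)"
      proof
        fix x assume x: "x \<in> I (Suc n)"
        hence "x \<in> PA e" using dec e(3) by blast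
        then obtain r a where ra: "r \<in> carrier R" "a \<in> A" "x = e \<otimes> r \<oplus> a" unfolding PA_def by blast
        have aI: "a \<in> I (Suc n)" using ra(2) I(2) by blast
        have ac: "a \<in> carrier R" using Ac ra(2) by blast
        have "x \<ominus> a = e \<otimes> r" using ra e ac by (simp add: ring_simprules)
        moreover have "x \<ominus> a \<in> I (Suc n)" using ri_minus[OF I(1) x aI] .
        ultimately have "e \<otimes> r \<in> Jn" unfolding Jn_def P_def using ra(1) by auto
        hence "e \<otimes> r \<in> PA c" using cp(3) by blast
        then obtain s a' where sa: "s \<in> carrier R" "a' \<in> A" "e \<otimes> r = c \<otimes> s \<oplus> a'" unfolding PA_def by blast
        have a'c: "a' \<in> carrier R" using Ac sa(2) by blast
        have "(c \<otimes> e) \<otimes> (c \<otimes> s) = c \<otimes> s" using e cc sa(1) ec2 cc2 by (simp add: m_assoc)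
        hence "x = (c \<otimes> e) \<otimes> (c \<otimes> s) \<oplus> (a' \<oplus> a)" using ra(3) sa(3) cc sa(1) a'c ac by (simp add: a_assoc)
        moreover have "a' \<oplus> a \<in> A" using additive_subgroup.a_closed[OF Aas sa(2) ra(2)] .
        moreover have "c \<otimes> s \<in> carrier R" using cc sa(1) by simp
        ultimately show "x \<in> PA (c \<otimes> e)" unfolding PA_def by blast
      qed
      show ?thesis unfolding eS using r1 r2 r3 r4 r5 cc e unfolding e_def by simp
    qed
    have Q: "es n \<in> carrier R \<and> es n \<otimes> es n = es n \<and> es n \<in> I n \<and> I n \<subseteq> PA (es n)" for n
    proof (induction n)
      case 0 show ?case using chp[OF I(1)[of 0]] Ic es0 by auto
    next
      case (Suc n) thus ?case using step[of n] by blast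
    qed
    have rel: "es n \<otimes> es (Suc n) = es (Suc n)" "es (Suc n) \<otimes> es n = es (Suc n)" for n
      using step[of n] Q[of n] by auto
    have esc: "es n \<in> carrier R" "es n \<otimes> es n = es n" for n using Q by auto
    define E where "E n = \<one> \<ominus> es n" for n
    define G where "G n = es n \<ominus> es (Suc n)" for n
    have hch: "E n \<in> carrier R \<and> E n \<otimes> E n = E n \<and> G n \<in> carrier R \<and> G n \<otimes> G n = G n
      \<and> E n \<otimes> G n = \<zero> \<and> G n \<otimes> E n = \<zero> \<and> E (Suc n) = E n \<oplus> G n" for n
      unfolding E_def G_def using pair_idem[OF esc(1)[of n] esc(1)[of "Suc n"] esc(2)[of n] esc(2)[of "Suc n"] rel(1)[of n] rel(2)[of n]]
      esc[of n] esc[of "Suc n"] by simp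
    have orth: "G k \<otimes> G j = \<zero>" if "k \<noteq> j" for k j using up_chain_orth[of E G, OF hch that] .
    have GA: "G n \<notin> Ann R M" if ne: "I n \<noteq> I (Suc n)" for n
    proof
      assume GA: "G n \<in> Ann R M"
      have "I n \<subseteq> I (Suc n)"
      proof
        fix x assume "x \<in> I n"
        hence "x \<in> PA (es n)" using Q by blast
        then obtain r a where ra: "r \<in> carrier R" "a \<in> A" "x = es n \<otimes> r \<oplus> a" unfolding PA_def by blast
        have ac: "a \<in> carrier R" using Ac ra(2) by blast
        have Gc: "G n \<in> carrier R" using hch by blast
        have "x = es (Suc n) \<otimes> r \<oplus> (G n \<otimes> r \<oplus> a)" unfolding ra(3) G_def
          using esc(1)[of n] esc(1)[of "Suc n"] ra(1) ac by (simp add: ring_simprules)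
        moreover have "es (Suc n) \<otimes> r \<in> I (Suc n)" using ri_mult[OF I(1) _ ra(1)] Q[of "Suc n"] by blast
        moreover have "G n \<otimes> r \<in> I (Suc n)" using ideal.I_r_closed[OF Aid GA[folded A_def] ra(1)] I(2) by blast
        moreover have "a \<in> I (Suc n)" using ra(2) I(2) by blast
        ultimately show "x \<in> I (Suc n)" using ri_add[OF I(1)] by metis
      qed
      thus False using dec[of n] ne by blast
    qed
    have infS: "infinite {n. I n \<noteq> I (Suc n)}" using chain_inf[OF nc] .
    have sub: "{n. I n \<noteq> I (Suc n)} \<subseteq> {k. G k \<notin> Ann R M}" using GA by auto
    have "infinite {k. G k \<notin> Ann R M}" using infinite_super[OF sub infS] .
    hence "\<not> sigma_aleph0_injective TYPE('i) R M"
    proof (intro not_inj[OF m inf])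
      show "G k \<in> carrier R \<and> G k \<otimes> G k = G k" for k using hch by blast
      show "G k \<otimes> G j = \<zero>" if "k \<noteq> j" for k j using orth[OF that] .
    qed
    thus False using sig by simp
  qed
qed

end

theorem lemma3p4:
  fixes R :: "('a, 'c) ring_scheme" and M :: "('a, 'b, 'd) rmodule_scheme"
  assumes "von_neumann_regular R"
    and "right_module R M"
    and "infinite (UNIV :: 'i set)"
  shows "sigma_aleph0_injective TYPE('i) R M \<longleftrightarrow> artinian_ring (R Quot (Ann R M))"
proof -
  have rR: "ring R" and reg: "\<forall>a\<in>carrier R. \<exists>x\<in>carrier R. a \<otimes>\<^bsub>R\<^esub> x \<otimes>\<^bsub>R\<^esub> a = a"
    using assms(1) unfolding von_neumann_regular_def by auto
  interpret ring R by (rule rR)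
  have Aid: "ideal (Ann R M) R" by (rule Ann_ideal[OF assms(2)])
  show ?thesis
  proof
    assume sig: "sigma_aleph0_injective TYPE('i) R M"
    have "dccA R (Ann R M)" by (rule fwd_dir[OF reg assms(2) assms(3) sig])
    thus "artinian_ring (R Quot (Ann R M))" using quot_artinian[OF Aid] by simp
  next
    assume art: "artinian_ring (R Quot (Ann R M))"
    hence dcc: "dccA R (Ann R M)" using quot_artinian[OF Aid] by simp
    show "sigma_aleph0_injective TYPE('i) R M"
      unfolding sigma_aleph0_injective_def using rev_dir[OF reg assms(2) dcc] by blast
  qed
qed

end
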